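(* For all $a,a'\in\mathbb F_{3^m}$, the vectors $(\mathrm{Tr}_{2m}(at^{3^m+1}))_{t\in\mathbb F_{3^{2m}}}$ and $(\mathrm{Tr}_{2m}(at^{3^m+1})\,\mathrm{Tr}_{2m}(a't^{3^m+1}))_{t\in\mathbb F_{3^{2m}}}$ belong to $\mathcal C_3(\mathbb D_d)$.
   Context: Let $m\ge 2$ be an integer. For $s\in\{m,2m\}$ let $\mathrm{Tr}_s:\mathbb F_{3^s}\to\mathbb F_3$ denote the absolute trace. Vectors in $\mathbb F_3^{3^{2m}}$ are indexed by $\mathbb F_{3^{2m}}$, and a function $f:\mathbb F_{3^{2m}}\to\mathbb F_3$ is identified with $(f(t))_{t\in\mathbb F_{3^{2m}}}$. Let $\mathcal C(2m,3)=\{(\mathrm{Tr}_{2m}(at^{3^m+1}+bt)+h)_{t\in\mathbb F_{3^{2m}}}: a\in\mathbb F_{3^m}, b\in\mathbb F_{3^{2m}}, h\in\mathbb F_3\}$, let $d$ be its minimum nonzero Hamming weight, let $\mathbb D_d$ be the incidence structure on $\mathbb F_{3^{2m}}$ whose blocks are the supports of the weight-$d$ codewords, and let $\mathcal C_3(\mathbb D_d)$ be the $\mathbb F_3$-span of the incidence vectors of the blocks (entry $1$ on the block, $0$ elsewhere). *)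

theory Defs
  imports Main
begin

text \<open>The ambient field is a finite field type 'a (intended: F_{3^{2m}}).
  Subfields are realised inside 'a: F_{3^k} = {x. x^(3^k) = x}; in particular
  F_3 = {x. x^3 = x} is the prime field. Vectors indexed by F_{3^{2m}} with
  entries in F_3 are functions 'a => 'a (values in the prime field).\<close>

definition subF :: "nat \<Rightarrow> 'a::field set" where
  "subF k = {x. x ^ (3 ^ k) = x}"

definition F3 :: "'a::field set" where
  "F3 = {x. x ^ 3 = x}"

definition Tr :: "nat \<Rightarrow> 'a::field \<Rightarrow> 'a" where
  "Tr s x = (\<Sum>i<s. x ^ (3 ^ i))"

definition code_C :: "nat \<Rightarrow> ('a::{field,finite} \<Rightarrow> 'a) set" where
  "code_C m = {(\<lambda>t. Tr (2*m) (a * t ^ (3 ^ m + 1) + b * t) + h) | a b h.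
                  a \<in> subF m \<and> h \<in> F3}"

definition hweight :: "('a::finite \<Rightarrow> 'b::zero) \<Rightarrow> nat" where
  "hweight c = card {t. c t \<noteq> 0}"

definition min_weight :: "('a::finite \<Rightarrow> 'b::zero) set \<Rightarrow> nat" where
  "min_weight C = Min {hweight c | c. c \<in> C \<and> c \<noteq> (\<lambda>_. 0)}"

text \<open>Blocks of the design D_d: supports of the minimum-weight codewords.\<close>
definition min_blocks :: "('a::finite \<Rightarrow> 'b::zero) set \<Rightarrow> 'a set set" where
  "min_blocks C = {{t. c t \<noteq> 0} | c. c \<in> C \<and> hweight c = min_weight C}"

definition incidence_vec :: "'a set \<Rightarrow> 'a \<Rightarrow> 'b::{zero,one}" where
  "incidence_vec B = (\<lambda>t. if t \<in> B then 1 else 0)"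

definition span_F3 :: "'a set set \<Rightarrow> ('a \<Rightarrow> 'b::field) set" where
  "span_F3 Bs = {(\<lambda>t. \<Sum>B\<in>S. coef B * incidence_vec B t) | S coef.
                    finite S \<and> S \<subseteq> Bs \<and> (\<forall>B\<in>S. coef B \<in> F3)}"

end

theory Submission imports Defs "HOL-Number_Theory.Residues" "HOL-Computational_Algebra.Polynomial" begin

lemma pow_card_same:
  fixes x :: "'a::{field,finite}"
  shows "x ^ card (UNIV :: 'a set) = x"
proof (cases "x = 0")
  case False
  have "x * (\<Prod>y\<in>UNIV-{0}. x * y) = x * x ^ (card (UNIV :: 'a set) - 1) * \<Prod>(UNIV-{0})"
    by (simp add: prod.distrib mult_ac)
  also have "x * x ^ (card (UNIV :: 'a set) - 1) = x ^ Suc (card (UNIV :: 'a set) - 1)"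
    by (subst power_Suc) auto
  also have "Suc (card (UNIV :: 'a set) - 1) = card (UNIV :: 'a set)"
    using finite_UNIV_card_ge_0[where ?'a = 'a] by simp
  also have "(\<Prod>y\<in>UNIV-{0}. x * y) = (\<Prod>y\<in>UNIV-{0}. y)"
    by (rule prod.reindex_bij_witness[of _ "\<lambda>y. y / x" "\<lambda>y. x * y"]) (use False in auto)
  finally show ?thesis
    by simp
qed (use finite_UNIV_card_ge_0[where ?'a = 'a] in auto)

context
  fixes m :: nat
  assumes card3: "card (UNIV :: 'a::{field,finite} set) = 3 ^ (2*m)"
  and m1: "m \<ge> 1"
begin

lemma CHAR3: "CHAR('a) = 3"
proof -
  have fin: "finite (UNIV :: 'a set)" by simp
  have p: "prime CHAR('a)"
    using prime_CHAR_semidom[where ?'a = 'a] finite_imp_CHAR_pos[OF fin] by auto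
  have "CHAR('a) dvd 3 ^ (2*m)" using CHAR_dvd_CARD[where ?'a='a] card3 by simp
  then have "CHAR('a) dvd 3" using p prime_dvd_power by blast
  moreover have "prime (3::nat)" by simp
  ultimately have "CHAR('a) = 1 \<or> CHAR('a) = 3" using prime_nat_iff by blast
  then show ?thesis by simp
qed

lemma three0: "(3::'a) = 0"
  using of_nat_CHAR[where ?'a='a] CHAR3 by simp

lemma two_eq: "(2::'a) = - 1"
proof -
  have "(2::'a) + 1 = 3" by simp
  then have "(2::'a) + 1 = 0" using three0 by simp
  then show ?thesis by (simp add: eq_neg_iff_add_eq_0)
qed

lemma four_eq: "(4::'a) = 1"
proof -
  have "(4::'a) = 3 + 1" by simp
  then show ?thesis using three0 by simp
qed

lemma two_ne0: "(2::'a) \<noteq> 0"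
  by (metis two_eq neg_equal_0_iff_equal one_neq_zero)

lemma frob: "((x::'a) + y) ^ (3^k) = x^(3^k) + y^(3^k)"
  using freshmans_dream'[of "3^k" k x y] CHAR3 by simp

lemma frob_neg: "(- (x::'a)) ^ (3^k) = - (x^(3^k))"
  by (simp add: power_minus_odd)

lemma frob_diff: "((x::'a) - y) ^ (3^k) = x^(3^k) - y^(3^k)"
  using frob[of x "-y" k] frob_neg[of y k] by simp

lemma frob_sum: "(\<Sum>i\<in>A. f i :: 'a) ^ (3^k) = (\<Sum>i\<in>A. f i ^ (3^k))"
  by (induction A rule: infinite_finite_induct) (auto simp: frob)

lemma powq2: "(x::'a) ^ (3^(2*m)) = x"
  using pow_card_same[of x] card3 by simp

lemma F3_iff: "(x::'a) \<in> F3 \<longleftrightarrow> x = 0 \<or> x = 1 \<or> x = -1"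
proof
  assume "x \<in> F3"
  then have "x^3 = x" by (simp add: F3_def)
  then have "x * (x - 1) * (x + 1) = 0" by (simp add: algebra_simps power3_eq_cube)
  then show "x = 0 \<or> x = 1 \<or> x = -1" by (auto simp: eq_neg_iff_add_eq_0)
next
  assume "x = 0 \<or> x = 1 \<or> x = -1"
  then show "x \<in> F3" by (auto simp: F3_def)
qed

lemma one_ne_neg1: "(1::'a) \<noteq> -1"
  using two_ne0 by (metis one_add_one add_eq_0_iff2 eq_neg_iff_add_eq_0)

lemma cube_add: "((x::'a) + y)^3 = x^3 + y^3"
  using frob[of x y 1] by simp

lemma cube_neg: "(-(x::'a))^3 = - (x^3)"
  by simp

lemma F3_add: "x \<in> F3 \<Longrightarrow> y \<in> F3 \<Longrightarrow> (x::'a) + y \<in> F3"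
  by (simp add: F3_def cube_add)
lemma F3_neg: "x \<in> F3 \<Longrightarrow> - (x::'a) \<in> F3"
  by (simp add: F3_def)
lemma F3_diff: "x \<in> F3 \<Longrightarrow> y \<in> F3 \<Longrightarrow> (x::'a) - y \<in> F3"
  using F3_add[of x "-y"] F3_neg[of y] by simp
lemma F3_mult: "x \<in> F3 \<Longrightarrow> y \<in> F3 \<Longrightarrow> (x::'a) * y \<in> F3"
  by (simp add: F3_def power_mult_distrib)
lemma F3_0: "(0::'a) \<in> F3" by (simp add: F3_def)
lemma F3_1: "(1::'a) \<in> F3" by (simp add: F3_def)
lemma F3_m1: "(-1::'a) \<in> F3" by (simp add: F3_def)
lemma F3_2: "(2::'a) \<in> F3" using F3_m1 two_eq by metis

lemma F3_pow: "c \<in> F3 \<Longrightarrow> (c::'a) ^ (3^i) = c"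
proof (induction i)
  case (Suc i)
  have "c ^ (3 ^ Suc i) = (c ^ (3^i)) ^ 3" by (simp add: power_mult[symmetric] mult.commute)
  then show ?case using Suc by (simp add: F3_def)
qed simp

lemma Tr_add: "Tr n ((x::'a) + y) = Tr n x + Tr n y"
  by (simp add: Tr_def frob sum.distrib)
lemma Tr_neg: "Tr n (-(x::'a)) = - Tr n x"
  by (simp add: Tr_def frob_neg sum_negf)
lemma Tr_diff: "Tr n ((x::'a) - y) = Tr n x - Tr n y"
  using Tr_add[of n x "-y"] Tr_neg[of n y] by simp
lemma Tr_0: "Tr n (0::'a) = 0"
  unfolding Tr_def by (intro sum.neutral) simp
lemma Tr_smul: "c \<in> F3 \<Longrightarrow> Tr n ((c::'a) * x) = c * Tr n x"
  by (simp add: Tr_def power_mult_distrib F3_pow sum_distrib_left)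

lemma Tr_shift: "(\<Sum>i<2*m. (x::'a) ^ (3 ^ Suc i)) = Tr (2*m) x"
proof -
  have a: "(\<Sum>i<Suc (2*m). x ^ (3^i)) = x ^ (3^0) + (\<Sum>i<2*m. x ^ (3 ^ Suc i))"
    by (rule sum.lessThan_Suc_shift)
  have b: "(\<Sum>i<Suc (2*m). x ^ (3^i)) = (\<Sum>i<2*m. x ^ (3^i)) + x ^ (3^(2*m))"
    by simp
  show ?thesis using a b powq2[of x] by (simp add: Tr_def)
qed

lemma Tr_cube: "Tr (2*m) ((x::'a)^3) = Tr (2*m) x"
proof -
  have "Tr (2*m) (x^3) = (\<Sum>i<2*m. x ^ (3 ^ Suc i))"
    by (simp add: Tr_def power_mult[symmetric] mult.commute)
  then show ?thesis using Tr_shift by simp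
qed

lemma Tr_F3: "Tr (2*m) (x::'a) \<in> F3"
proof -
  have "Tr (2*m) x ^ 3 = Tr (2*m) (x^3)"
    using frob_sum[of "\<lambda>i. x ^ (3^i)" "{..<2*m}" 1]
    by (simp add: Tr_def power_mult[symmetric] mult.commute)
  then show ?thesis using Tr_cube by (simp add: F3_def)
qed

lemma Tr_powk: "Tr (2*m) ((x::'a)^(3^k)) = Tr (2*m) x"
proof (induction k)
  case (Suc k)
  have "x^(3^Suc k) = (x^(3^k))^3" by (simp add: power_mult[symmetric] mult.commute)
  then show ?case using Suc Tr_cube by simp
qed simp

lemma Tr_sub: assumes "z \<in> subF m" shows "Tr (2*m) (z::'a) = 2 * Tr m z"
proof -
  define f where "f i = z^(3^i)" for i
  have zq: "f (i+m) = f i" for i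
  proof -
    have "z^(3^(i+m)) = (z^(3^m))^(3^i)" by (simp add: power_add power_mult[symmetric] mult.commute)
    then show ?thesis using assms by (simp add: subF_def f_def)
  qed
  have "Tr (2*m) z = sum f {0..<m+m}" by (simp add: Tr_def mult_2 f_def atLeast0LessThan)
  also have "\<dots> = sum f {0..<m} + sum f {m..<m+m}"
    by (rule sum.atLeastLessThan_concat[symmetric]) auto
  also have "sum f {m..<m+m} = sum (\<lambda>i. f (i+m)) {0..<m}"
    using sum.shift_bounds_nat_ivl[of f 0 m m] by simp
  also have "\<dots> = sum f {0..<m}" using zq by simp
  finally have c: "Tr (2*m) z = sum f {0..<m} + sum f {0..<m}" .
  have t: "Tr m z = sum f {0..<m}" by (simp add: Tr_def f_def atLeast0LessThan)
  show ?thesis unfolding c t by (rule mult_2[symmetric])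
qed

lemma roots_le:
  fixes p :: "'a poly"
  assumes "coeff p D \<noteq> 0" "degree p \<le> D" "\<And>t. P t \<Longrightarrow> poly p t = 0"
  shows "card {t. P t} \<le> D"
proof -
  have "p \<noteq> 0" using assms(1) by auto
  have "card {t. P t} \<le> card {t. poly p t = 0}"
    by (rule card_mono) (use assms(3) in auto)
  also have "\<dots> \<le> degree p" by (rule card_poly_roots_bound) fact
  finally show ?thesis using assms(2) by simp
qed

lemma Tr_roots: assumes "n \<ge> 1" "(b::'a) \<noteq> 0"
  shows "card {t. Tr n (b*t) = c} \<le> 3^(n-1)"
proof -
  define p where "p = (\<Sum>i<n. monom (b^(3^i)) (3^i)) - monom c 0"
  have ev: "poly p t = Tr n (b*t) - c" for t
    by (simp add: p_def poly_sum poly_monom Tr_def power_mult_distrib)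
  have inj: "((3::nat)^i = 3^(n-1)) \<longleftrightarrow> i = n-1" for i by simp
  have "coeff p (3^(n-1)) = (\<Sum>i<n. if i = n-1 then b^(3^i) else 0)"
    by (simp add: p_def coeff_sum coeff_monom inj)
  also have "\<dots> = b^(3^(n-1))" using assms(1) by (subst sum.delta) auto
  finally have c: "coeff p (3^(n-1)) \<noteq> 0" using assms(2) by simp
  have d: "degree p \<le> 3^(n-1)"
    unfolding p_def
  proof (intro degree_diff_le degree_sum_le)
    fix i assume "i \<in> {..<n}"
    then have "(3::nat)^i \<le> 3^(n-1)" by (intro power_increasing) auto
    then show "degree (monom (b ^ 3 ^ i) (3 ^ i)) \<le> 3 ^ (n - 1)"
      using degree_monom_le order_trans by blast
  qed (auto intro: order_trans[OF degree_monom_le])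
  show ?thesis by (rule roots_le[OF c d]) (simp add: ev)
qed

lemma subF_le: "card (subF m :: 'a set) \<le> 3^m"
proof -
  define p :: "'a poly" where "p = monom 1 (3^m) - monom 1 1"
  have h: "Suc 0 \<noteq> (3::nat)^m" using m1 proof -
    have "(3::nat)^1 \<le> 3^m" using m1 by (intro power_increasing) auto
    then show ?thesis by simp
  qed
  then have c: "coeff p (3^m) \<noteq> 0" by (simp add: p_def)
  have d: "degree p \<le> 3^m" unfolding p_def
    using m1 by (intro degree_diff_le) (auto intro: order_trans[OF degree_monom_le])
  have "card {t. poly p t = 0} \<le> 3^m" by (rule roots_le[OF c d]) simp
  moreover have "subF m = {t::'a. poly p t = 0}"
    by (auto simp: p_def poly_monom subF_def)
  ultimately show ?thesis by simp
qed

lemma fib_le: "card {t::'a. t^(3^m+1) = y} \<le> 3^m + 1"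
proof -
  define p :: "'a poly" where "p = monom 1 (3^m+1) - monom y 0"
  have c: "coeff p (3^m+1) \<noteq> 0" by (simp add: p_def coeff_monom)
  have d: "degree p \<le> 3^m+1" unfolding p_def
    by (intro degree_diff_le) (auto intro: order_trans[OF degree_monom_le])
  show ?thesis by (rule roots_le[OF c d]) (simp add: p_def poly_monom)
qed

lemma subF_mult: "x \<in> subF m \<Longrightarrow> y \<in> subF m \<Longrightarrow> (x::'a) * y \<in> subF m"
  by (simp add: subF_def power_mult_distrib)
lemma subF_add: "x \<in> subF m \<Longrightarrow> y \<in> subF m \<Longrightarrow> (x::'a) + y \<in> subF m"
  by (simp add: subF_def frob)
lemma subF_diff: "x \<in> subF m \<Longrightarrow> y \<in> subF m \<Longrightarrow> (x::'a) - y \<in> subF m"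
  by (simp add: subF_def frob_diff)
lemma subF_0: "(0::'a) \<in> subF m"
  by (simp add: subF_def)

lemma qq: "(3::nat)^(2*m) = 3^m * 3^m"
  by (simp add: power_add[symmetric] mult_2)

lemma powq2': "(x::'a) ^ (3^m * 3^m) = x"
  using powq2[of x] qq by simp

lemma norm_sub: "(t::'a)^(3^m+1) \<in> subF m"
proof -
  have "(t^(3^m+1))^(3^m) = t^(3^m*3^m) * t^(3^m)"
    by (simp add: power_mult[symmetric] power_add algebra_simps)
  also have "\<dots> = t^(3^m+1)" using powq2'[of t] by (simp add: mult.commute)
  finally show ?thesis by (simp add: subF_def)
qed

definition fib :: "'a \<Rightarrow> 'a set" where "fib y = {t. t^(3^m+1) = y}"

lemma norm_count:
  "card (subF m :: 'a set) = 3^m \<and> (\<forall>y\<in>subF m. y \<noteq> 0 \<longrightarrow> card (fib y) = 3^m+1)"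
proof -
  define q :: nat where "q = 3^m"
  have q1: "q \<ge> 1" by (simp add: q_def)
  define S where "S = (subF m :: 'a set) - {0}"
  have un: "(UNIV - {0} :: 'a set) = (\<Union>y\<in>S. fib y)"
    using norm_sub by (auto simp: S_def fib_def)
  have "card (UNIV - {0} :: 'a set) = q*q - 1"
    using card3 qq by (simp add: q_def)
  also have "card (UNIV - {0} :: 'a set) = (\<Sum>y\<in>S. card (fib y))"
    unfolding un by (rule card_UN_disjoint) (auto simp: fib_def)
  finally have sum_eq: "(\<Sum>y\<in>S. card (fib y)) = q*q - 1" .
  have fl: "\<forall>y\<in>S. card (fib y) \<le> q+1" using fib_le by (simp add: fib_def q_def)
  have cS: "card S \<le> q - 1"
    using subF_le subF_0 by (simp add: S_def q_def)
  have "(\<Sum>y\<in>S. card (fib y)) \<le> card S * (q+1)"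
    using sum_bounded_above[of S "\<lambda>y. card (fib y)" "q+1"] fl by simp
  then have "q*q - 1 \<le> card S * (q+1)" using sum_eq by simp
  moreover have "q*q - 1 = (q-1)*(q+1)" using q1 by (simp add: algebra_simps)
  ultimately have "(q-1)*(q+1) \<le> card S * (q+1)" by simp
  then have "q - 1 \<le> card S" by (rule mult_right_le_imp_le) simp
  then have cS2: "card S = q - 1" using cS by simp
  have c1: "card (subF m :: 'a set) = q"
  proof -
    have "card S = card (subF m :: 'a set) - 1" using subF_0 by (simp add: S_def)
    moreover have "card (subF m :: 'a set) \<ge> 1"
      using subF_0 by (metis card_0_eq empty_iff finite less_one not_le)
    ultimately show ?thesis using cS2 q1 by simp
  qed
  have c2: "\<forall>y\<in>S. card (fib y) = q+1"
  proof (rule ccontr)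
    assume "\<not> ?thesis"
    then obtain y0 where y0: "y0 \<in> S" "card (fib y0) \<noteq> q+1" by blast
    have "(\<Sum>y\<in>S. card (fib y)) < (\<Sum>y\<in>S. q+1)"
      by (rule sum_strict_mono_ex1) (use fl y0 le_neq_implies_less in force)+
    then show False using sum_eq cS2 \<open>q*q - 1 = (q-1)*(q+1)\<close> by (simp add: mult.commute)
  qed
  show ?thesis using c1 c2 by (auto simp: S_def q_def)
qed

definition AT :: "'a \<Rightarrow> 'a \<Rightarrow> 'a set" where
  "AT a c = {y \<in> subF m. Tr (2*m) (a*y) = c}"

lemma AT_le: assumes "a \<in> subF m" "(a::'a) \<noteq> 0" shows "card (AT a c) \<le> 3^(m-1)"
proof -
  have "AT a c \<subseteq> {y. Tr m (a*y) = 2*c}"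
  proof
    fix y assume y: "y \<in> AT a c"
    then have "a*y \<in> subF m" using assms subF_mult by (auto simp: AT_def)
    then have "2 * Tr m (a*y) = c" using Tr_sub y by (auto simp: AT_def)
    then have "4 * Tr m (a*y) = 2*c" by (metis mult.assoc num_double numeral_times_numeral)
    then show "y \<in> {y. Tr m (a*y) = 2*c}" using four_eq by simp
  qed
  then have "card (AT a c) \<le> card {y. Tr m (a*y) = 2*c}" by (intro card_mono) auto
  also have "\<dots> \<le> 3^(m-1)" using Tr_roots m1 assms(2) by blast
  finally show ?thesis .
qed

lemma AT_eq: assumes "a \<in> subF m" "(a::'a) \<noteq> 0" "c \<in> F3" shows "card (AT a c) = 3^(m-1)"
proof -
  define K :: nat where "K = 3^(m-1)"
  have K3: "3 * K = 3^m" using m1 by (simp add: K_def power_eq_if)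
  have un: "subF m = AT a 0 \<union> (AT a 1 \<union> AT a (-1))"
    using Tr_F3 by (auto simp: AT_def F3_iff)
  have d1: "AT a 1 \<inter> AT a (-1) = {}" using one_ne_neg1 by (auto simp: AT_def)
  have d0: "AT a 0 \<inter> (AT a 1 \<union> AT a (-1)) = {}" by (auto simp: AT_def)
  have "3^m = card (subF m :: 'a set)" using norm_count by simp
  also have "\<dots> = card (AT a 0) + (card (AT a 1) + card (AT a (-1)))"
    unfolding un using d0 d1 by (simp add: card_Un_disjoint)
  finally have s: "card (AT a 0) + (card (AT a 1) + card (AT a (-1))) = 3 * K" using K3 by simp
  have l: "card (AT a x) \<le> K" for x using AT_le[OF assms(1,2)] by (simp add: K_def)
  have e0: "card (AT a 0) = K" and e1: "card (AT a 1) = K" and e2: "card (AT a (-1)) = K"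
    using s l[of 0] l[of 1] l[of "-1"] by linarith+
  show ?thesis using assms(3) e0 e1 e2 by (auto simp: F3_iff K_def)
qed

definition Zs :: "'a \<Rightarrow> 'a \<Rightarrow> 'a set" where
  "Zs a c = {t. Tr (2*m) (a * t^(3^m+1)) = c}"

lemma Zs_un: "Zs a c = (\<Union>y\<in>AT a c. fib y)"
  using norm_sub by (auto simp: Zs_def AT_def fib_def)

lemma Zs_card: "card (Zs a c) = (\<Sum>y\<in>AT a c. card (fib y))"
  unfolding Zs_un by (rule card_UN_disjoint) (auto simp: fib_def)

lemma Zs_le: assumes "a \<in> subF m" "(a::'a) \<noteq> 0" shows "card (Zs a c) \<le> 3^(m-1)*(3^m+1)"
proof -
  have "card (Zs a c) \<le> card (AT a c) * (3^m+1)"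
    unfolding Zs_card using sum_bounded_above[of "AT a c" "\<lambda>y. card (fib y)" "3^m+1"] fib_le
    by (simp add: fib_def)
  also have "\<dots> \<le> 3^(m-1)*(3^m+1)" using AT_le[OF assms, of c] by (intro mult_right_mono) auto
  finally show ?thesis .
qed

lemma Zs_eq: assumes "a \<in> subF m" "(a::'a) \<noteq> 0" "c \<in> F3" "c \<noteq> 0"
  shows "card (Zs a c) = 3^(m-1)*(3^m+1)"
proof -
  have "\<forall>y\<in>AT a c. card (fib y) = 3^m+1"
  proof
    fix y assume y: "y \<in> AT a c"
    then have "y \<noteq> 0" using assms(4) Tr_0 by (auto simp: AT_def)
    then show "card (fib y) = 3^m+1" using norm_count y by (auto simp: AT_def)
  qed
  then have "card (Zs a c) = card (AT a c) * (3^m+1)" unfolding Zs_card by simp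
  then show ?thesis using AT_eq[OF assms(1-3)] by simp
qed

lemma shift_card: "card {t::'a. P (t+u)} = card {t. P t}"
proof -
  have "{t::'a. P (t+u)} = (\<lambda>s. s - u) ` {t. P t}"
    by (auto simp: image_iff intro!: exI[of _ "_ + u"])
  moreover have "inj_on (\<lambda>s::'a. s - u) {t. P t}" by (auto simp: inj_on_def)
  ultimately show ?thesis by (simp add: card_image)
qed

lemma Tr_swap: assumes "(a::'a) \<in> subF m" shows "Tr (2*m) (a*t^(3^m)*u) = Tr (2*m) (a*u^(3^m)*(t::'a))"
proof -
  have "(a*u^(3^m)*t)^(3^m) = a^(3^m) * u^(3^m*3^m) * t^(3^m)"
    by (simp add: power_mult_distrib power_mult[symmetric])
  also have "\<dots> = a*t^(3^m)*u" using assms powq2'[of u] by (simp add: subF_def mult_ac)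
  finally show ?thesis using Tr_powk[of "a*u^(3^m)*t" m] by simp
qed

lemma trans_id: assumes "(a::'a) \<in> subF m"
  shows "Tr (2*m) (a*(t+u)^(3^m+1)) = Tr (2*m) (a*t^(3^m+1) + 2*a*u^(3^m)*t) + Tr (2*m) (a*u^(3^m+1::nat))"
proof -
  have "a*(t+u)^(3^m+1) = a*t^(3^m+1) + a*t^(3^m)*u + a*u^(3^m)*t + a*u^(3^m+1)"
    by (simp add: frob algebra_simps)
  then have "Tr (2*m) (a*(t+u)^(3^m+1)) = Tr (2*m) (a*t^(3^m+1)) + Tr (2*m) (a*t^(3^m)*u)
      + Tr (2*m) (a*u^(3^m)*t) + Tr (2*m) (a*u^(3^m+1))"
    by (simp add: Tr_add)
  also have "Tr (2*m) (a*t^(3^m)*u) = Tr (2*m) (a*u^(3^m)*t)" by (rule Tr_swap[OF assms])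
  also have "Tr (2*m) (a*t^(3^m+1) + 2*a*u^(3^m)*t) = Tr (2*m) (a*t^(3^m+1)) + 2 * Tr (2*m) (a*u^(3^m)*t)"
    using Tr_smul[OF F3_2, of "2*m" "a*u^(3^m)*t"] by (simp add: Tr_add mult.assoc)
  ultimately show ?thesis by (simp add: algebra_simps)
qed

lemma zero_card_gen: assumes "a \<in> subF m" "(a::'a) \<noteq> 0"
  shows "card {t. Tr (2*m) (a*t^(3^m+1) + b*t) + h = 0} \<le> 3^(m-1)*(3^m+1)"
proof -
  define u where "u = (b/(2*a))^(3^m)"
  have uq: "u^(3^m) = b/(2*a)" using powq2'[of "b/(2*a)"] by (simp add: u_def power_mult[symmetric])
  have b: "2*a*u^(3^m) = b" using uq two_ne0 assms(2) by simp
  define K where "K = Tr (2*m) (a*u^(3^m+1)) - h"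
  have "{t. Tr (2*m) (a*t^(3^m+1) + b*t) + h = 0} = {t. Tr (2*m) (a*(t+u)^(3^m+1)) = K}"
    using trans_id[OF assms(1), of _ u] b by (auto simp: K_def algebra_simps)
  also have "card \<dots> = card (Zs a K)" unfolding Zs_def by (rule shift_card)
  finally show ?thesis using Zs_le[OF assms] by simp
qed

lemma zero_card_min: assumes "a \<in> subF m" "(a::'a) \<noteq> 0" "e \<in> F3" "e \<noteq> 0"
  shows "card {t. Tr (2*m) (a*(t+u)^(3^m+1)) - e = 0} = 3^(m-1)*(3^m+1)"
proof -
  have "card {t. Tr (2*m) (a*(t+u)^(3^m+1)) - e = 0} = card {t. Tr (2*m) (a*(t+u)^(3^m+1)) = e}" by simp
  also have "\<dots> = card (Zs a e)" unfolding Zs_def by (rule shift_card)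
  finally show ?thesis using Zs_eq[OF assms] by simp
qed

lemma hweight_eq: "hweight (c::'a \<Rightarrow> 'a) = 3^(2*m) - card {t. c t = 0}"
proof -
  have "{t. c t \<noteq> 0} = UNIV - {t. c t = 0}" by auto
  then show ?thesis unfolding hweight_def using card3 by (simp add: card_Diff_subset)
qed

lemma Zmax_lt: "3^(m-1)*(3^m+1) < (3::nat)^(2*m)"
proof -
  define K :: nat where "K = 3^(m-1)"
  have q: "3^m = 3*K" using m1 by (simp add: K_def power_eq_if)
  have K1: "K \<ge> 1" by (simp add: K_def)
  have "K*(3*K+1) < 3*K*(3*K)" using K1 by (simp add: algebra_simps)
  then show ?thesis using q qq by (simp add: K_def)
qed

lemma code_zero_le: assumes "c \<in> (code_C m :: ('a \<Rightarrow> 'a) set)" "c \<noteq> (\<lambda>_. 0)"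
  shows "card {t. c t = 0} \<le> 3^(m-1)*(3^m+1)"
proof -
  obtain a b h where c: "c = (\<lambda>t. Tr (2*m) (a * t ^ (3 ^ m + 1) + b * t) + h)"
    and a: "a \<in> subF m" and h: "h \<in> F3"
    using assms(1) by (auto simp: code_C_def)
  show ?thesis
  proof (cases "a = 0")
    case False
    then show ?thesis using zero_card_gen[OF a False] c by simp
  next
    case a0: True
    show ?thesis
    proof (cases "b = 0")
      case True
      then have "c = (\<lambda>_. h)" using c a0 by (simp add: Tr_0)
      then have "h \<noteq> 0" using assms(2) by auto
      then show ?thesis using \<open>c = (\<lambda>_. h)\<close> by simp
    next
      case False
      have "{t. c t = 0} = {t. Tr (2*m) (b*t) = -h}" using c a0 by (auto simp: eq_neg_iff_add_eq_0)
      then have "card {t. c t = 0} \<le> 3^(2*m-1)" using Tr_roots[of "2*m" b "-h"] m1 False by simp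
      also have "(3::nat)^(2*m-1) = 3^(m-1)*3^m" using m1 by (simp add: power_add[symmetric])
      also have "\<dots> \<le> 3^(m-1)*(3^m+1)" by simp
      finally show ?thesis .
    qed
  qed
qed

lemma cw: fixes u :: 'a assumes "(a::'a) \<in> subF m" "a \<noteq> 0" "e \<in> F3" "e \<noteq> 0"
  defines "g \<equiv> (\<lambda>t. Tr (2*m) (a*(t+u)^(3^m+1)) - e)"
  shows "g \<in> code_C m" "g \<noteq> (\<lambda>_. 0)" "hweight g = 3^(2*m) - 3^(m-1)*(3^m+1)"
proof -
  have "g = (\<lambda>t. Tr (2*m) (a * t ^ (3 ^ m + 1) + (2*a*u^(3^m)) * t) + (Tr (2*m) (a*u^(3^m+1)) - e))"
    unfolding g_def using trans_id[OF assms(1)] by (simp add: fun_eq_iff mult.assoc)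
  then show "g \<in> code_C m" unfolding code_C_def using assms(1,3) Tr_F3 F3_diff by blast
  have z: "card {t. g t = 0} = 3^(m-1)*(3^m+1)" unfolding g_def by (rule zero_card_min[OF assms(1-4)])
  then show "hweight g = 3^(2*m) - 3^(m-1)*(3^m+1)" by (simp add: hweight_eq)
  show "g \<noteq> (\<lambda>_. 0)"
  proof
    assume "g = (\<lambda>_. 0)"
    then have "card {t. g t = 0} = 3^(2*m)" using card3 by simp
    then show False using z Zmax_lt by simp
  qed
qed

lemma min_weight_eq: "min_weight (code_C m :: ('a \<Rightarrow> 'a) set) = 3^(2*m) - 3^(m-1)*(3^m+1)"
proof -
  define H where "H = {hweight c | c. c \<in> (code_C m :: ('a \<Rightarrow> 'a) set) \<and> c \<noteq> (\<lambda>_. 0)}"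
  have fin: "finite H"
  proof (rule finite_subset)
    show "H \<subseteq> {..card (UNIV::'a set)}" unfolding H_def hweight_def by (auto intro: card_mono)
  qed simp
  have lb: "\<forall>y\<in>H. 3^(2*m) - 3^(m-1)*(3^m+1) \<le> y"
    unfolding H_def using code_zero_le by (auto simp: hweight_eq intro: diff_le_mono2)
  have one: "(1::'a) \<in> subF m" by (simp add: subF_def)
  define g :: "'a \<Rightarrow> 'a" where "g = (\<lambda>t. Tr (2*m) (1*(t+0)^(3^m+1)) - 1)"
  have g: "g \<in> code_C m" "g \<noteq> (\<lambda>_. 0)" "hweight g = 3^(2*m) - 3^(m-1)*(3^m+1)"
    using cw[OF one one_neq_zero F3_1 one_neq_zero, of 0] unfolding g_def by blast+
  have mem: "3^(2*m) - 3^(m-1)*(3^m+1) \<in> H"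
    unfolding H_def by (rule CollectI, rule exI[of _ g]) (use g in auto)
  show ?thesis unfolding min_weight_def H_def[symmetric] using Min_eqI[OF fin] lb mem by blast
qed

lemma block: assumes "(a::'a) \<in> subF m" "a \<noteq> 0" "e \<in> F3" "e \<noteq> 0"
  shows "{t. Tr (2*m) (a*(t+u)^(3^m+1)) - e \<noteq> 0} \<in> min_blocks (code_C m :: ('a \<Rightarrow> 'a) set)"
proof -
  let ?g = "\<lambda>t. Tr (2*m) (a*(t+u)^(3^m+1)) - e"
  have g: "?g \<in> code_C m" "hweight ?g = min_weight (code_C m :: ('a \<Rightarrow> 'a) set)"
    using cw[OF assms, of u] min_weight_eq by simp_all
  show ?thesis unfolding min_blocks_def
    by (rule CollectI, rule exI[of _ ?g]) (use g in simp)
qed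

lemma inc_sq: assumes "\<forall>t. g t \<in> F3"
  shows "(incidence_vec {t. g t \<noteq> 0} :: 'a \<Rightarrow> 'a) = (\<lambda>t. (g t)^2)"
proof
  fix t
  have "g t = 0 \<or> g t = 1 \<or> g t = -1" using assms F3_iff by blast
  then show "(incidence_vec {t. g t \<noteq> 0} :: 'a \<Rightarrow> 'a) t = (g t)^2"
    by (elim disjE) (simp_all add: incidence_vec_def)
qed

lemma span_zero: "(\<lambda>t. 0) \<in> (span_F3 Bs :: ('b \<Rightarrow> 'a) set)"
  unfolding span_F3_def by (rule CollectI, rule exI[of _ "{}"]) auto

lemma span_inc: "B \<in> Bs \<Longrightarrow> (incidence_vec B :: 'b \<Rightarrow> 'a) \<in> span_F3 Bs"
  unfolding span_F3_def
  by (rule CollectI, rule exI[of _ "{B}"], rule exI[of _ "\<lambda>_. 1"]) (auto simp: F3_1)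

lemma span_add: assumes "f \<in> (span_F3 Bs :: ('b \<Rightarrow> 'a) set)" "g \<in> span_F3 Bs"
  shows "(\<lambda>t. f t + g t) \<in> span_F3 Bs"
proof -
  obtain S1 c1 where f: "f = (\<lambda>t. \<Sum>B\<in>S1. c1 B * incidence_vec B t)" "finite S1" "S1 \<subseteq> Bs" "\<forall>B\<in>S1. c1 B \<in> F3"
    using assms(1) unfolding span_F3_def by blast
  obtain S2 c2 where g: "g = (\<lambda>t. \<Sum>B\<in>S2. c2 B * incidence_vec B t)" "finite S2" "S2 \<subseteq> Bs" "\<forall>B\<in>S2. c2 B \<in> F3"
    using assms(2) unfolding span_F3_def by blast
  define c where "c B = (if B \<in> S1 then c1 B else 0) + (if B \<in> S2 then c2 B else 0)" for B
  have fin: "finite (S1 \<union> S2)" using f g by simp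
  have "(\<lambda>t. f t + g t) = (\<lambda>t. \<Sum>B\<in>S1 \<union> S2. c B * incidence_vec B t)"
  proof
    fix t
    have "(\<Sum>B\<in>S1 \<union> S2. c B * incidence_vec B t) =
      (\<Sum>B\<in>S1 \<union> S2. (if B \<in> S1 then c1 B * incidence_vec B t else 0) +
      (if B \<in> S2 then c2 B * incidence_vec B t else 0))"
      by (rule sum.cong) (auto simp: c_def distrib_right)
    also have "\<dots> = (\<Sum>B\<in>S1 \<union> S2. if B \<in> S1 then c1 B * incidence_vec B t else 0) +
      (\<Sum>B\<in>S1 \<union> S2. if B \<in> S2 then c2 B * incidence_vec B t else 0)"
      by (rule sum.distrib)
    also have "\<dots> = (\<Sum>B\<in>S1. c1 B * incidence_vec B t) + (\<Sum>B\<in>S2. c2 B * incidence_vec B t)"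
      using fin by (simp add: sum.inter_restrict[symmetric] Int_absorb1 Int_absorb2)
    finally show "f t + g t = (\<Sum>B\<in>S1 \<union> S2. c B * incidence_vec B t)" using f g by simp
  qed
  moreover have "\<forall>B\<in>S1 \<union> S2. c B \<in> F3"
    using f(4) g(4) by (auto simp: c_def intro!: F3_add F3_0)
  ultimately show ?thesis unfolding span_F3_def
    by (intro CollectI exI[of _ "S1 \<union> S2"] exI[of _ c]) (use fin f(3) g(3) in auto)
qed

lemma span_smul: assumes "f \<in> (span_F3 Bs :: ('b \<Rightarrow> 'a) set)" "k \<in> F3"
  shows "(\<lambda>t. k * f t) \<in> span_F3 Bs"
proof -
  obtain S1 c1 where f: "f = (\<lambda>t. \<Sum>B\<in>S1. c1 B * incidence_vec B t)" "finite S1" "S1 \<subseteq> Bs" "\<forall>B\<in>S1. c1 B \<in> F3"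
    using assms(1) unfolding span_F3_def by blast
  have "(\<lambda>t. k * f t) = (\<lambda>t. \<Sum>B\<in>S1. (k * c1 B) * incidence_vec B t)"
    using f(1) by (simp add: sum_distrib_left mult.assoc)
  moreover have "\<forall>B\<in>S1. k * c1 B \<in> F3" using f(4) assms(2) F3_mult by blast
  ultimately show ?thesis unfolding span_F3_def
    by (intro CollectI exI[of _ S1] exI[of _ "\<lambda>B. k * c1 B"]) (use f(2,3) in auto)
qed

abbreviation "BL \<equiv> min_blocks (code_C m :: ('a \<Rightarrow> 'a) set)"

lemma sq_in: assumes "(b::'a) \<in> subF m" "b \<noteq> 0" "e \<in> F3" "e \<noteq> 0"
  shows "(\<lambda>t. (Tr (2*m) (b*(t+u)^(3^m+1)) - e)^2) \<in> span_F3 BL"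
proof -
  have "(\<lambda>t. (Tr (2*m) (b*(t+u)^(3^m+1)) - e)^2) = incidence_vec {t. Tr (2*m) (b*(t+u)^(3^m+1)) - e \<noteq> 0}"
    by (rule inc_sq[symmetric]) (use Tr_F3 F3_diff assms(3) in blast)
  then show ?thesis using span_inc[OF block[OF assms]] by simp
qed

lemma Q_shift_in: assumes "(b::'a) \<in> subF m" "b \<noteq> 0"
  shows "(\<lambda>t. Tr (2*m) (b*(t+u)^(3^m+1))) \<in> span_F3 BL"
    "(\<lambda>t. (Tr (2*m) (b*(t+u)^(3^m+1)))^2 + 1) \<in> span_F3 BL"
proof -
  let ?Q = "\<lambda>t. Tr (2*m) (b*(t+u)^(3^m+1))"
  have m1ne: "(-1::'a) \<noteq> 0" by simp
  have A: "(\<lambda>t. (?Q t - 1)^2) \<in> span_F3 BL" using sq_in[OF assms F3_1 one_neq_zero] .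
  have B: "(\<lambda>t. (?Q t - (-1))^2) \<in> span_F3 BL" using sq_in[OF assms F3_m1 m1ne] .
  have id1: "(x + 1)^2 + (-1)*(x - 1)^2 = (x::'a)" for x
  proof -
    have "(x + 1)^2 + (-1)*(x - 1)^2 = 4*x" by (simp add: algebra_simps power2_eq_square)
    then show ?thesis using four_eq by simp
  qed
  have id2: "2*(x - 1)^2 + 2*(x + 1)^2 = (x::'a)^2 + 1" for x
  proof -
    have "2*(x - 1)^2 + 2*(x + 1)^2 = 4*x^2 + 4" by (simp add: algebra_simps power2_eq_square)
    then show ?thesis using four_eq by simp
  qed
  have "(\<lambda>t. (?Q t - (-1))^2 + (-1) * (?Q t - 1)^2) \<in> span_F3 BL"
    by (rule span_add[OF B span_smul[OF A F3_m1]])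
  then show "?Q \<in> span_F3 BL" using id1 by simp
  have "(\<lambda>t. 2*(?Q t - 1)^2 + 2*(?Q t - (-1))^2) \<in> span_F3 BL"
    by (rule span_add[OF span_smul[OF A F3_2] span_smul[OF B F3_2]])
  then show "(\<lambda>t. (?Q t)^2 + 1) \<in> span_F3 BL" using id2 by simp
qed

lemma const_in: assumes "(b::'a) \<in> subF m" "b \<noteq> 0"
  shows "(\<lambda>t. 1::'a) \<in> span_F3 BL"
proof -
  let ?Q = "\<lambda>t. Tr (2*m) (b*t^(3^m+1))"
  have "card (Zs b 1) > 0" using Zs_eq[OF assms F3_1 one_neq_zero] by simp
  then obtain u where u: "?Q u = 1" unfolding Zs_def by (metis (mono_tags, lifting) card.empty empty_iff less_irrefl mem_Collect_eq subsetI subset_antisym)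
  have ev: "even (3^m+1::nat)" by simp
  have par: "?Q (t+u) + ?Q (t+(-u)) = 2 * ?Q t + 2" for t
  proof -
    have "?Q (t+u) = ?Q t + Tr (2*m) (2*b*u^(3^m)*t) + ?Q u"
      using trans_id[OF assms(1), of t u] by (simp add: Tr_add)
    moreover have "?Q (t+(-u)) = ?Q t - Tr (2*m) (2*b*u^(3^m)*t) + ?Q u"
      using trans_id[OF assms(1), of t "-u"] ev by (simp add: Tr_add Tr_diff frob_neg Tr_neg)
    ultimately show ?thesis using u by (simp add: algebra_simps)
  qed
  have one: "1 = 2 * (?Q (t+u) + ?Q (t+(-u)) + ?Q (t+0))" for t
  proof -
    have "?Q (t+u) + ?Q (t+(-u)) + ?Q (t+0) = 3 * ?Q t + 2" using par[of t] by (simp add: algebra_simps)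
    also have "\<dots> = 2" using three0 by simp
    finally show ?thesis using four_eq by simp
  qed
  have "(\<lambda>t. 2 * (?Q (t+u) + ?Q (t+(-u)) + ?Q (t+0))) \<in> span_F3 BL"
    by (intro span_smul F3_2 span_add Q_shift_in assms)
  then show ?thesis using one by simp
qed

lemma main: assumes "(a::'a) \<in> subF m" "a' \<in> subF m"
  shows "(\<lambda>t. Tr (2*m) (a * t ^ (3 ^ m + 1))) \<in> span_F3 BL
       \<and> (\<lambda>t. Tr (2*m) (a * t ^ (3 ^ m + 1)) * Tr (2*m) (a' * t ^ (3 ^ m + 1))) \<in> span_F3 BL"
proof (cases "a = 0")
  case True
  then show ?thesis using span_zero by (simp add: Tr_0)
next
  case False
  let ?Q = "\<lambda>x t. Tr (2*m) (x*t^(3^m+1))"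
  have p1: "?Q a \<in> span_F3 BL" using Q_shift_in(1)[OF assms(1) False, of 0] by simp
  have sq1: "(\<lambda>t. (?Q x t)^2 + 1) \<in> span_F3 BL" if "x \<in> subF m" for x
  proof (cases "x = 0")
    case True
    then show ?thesis using const_in[OF assms(1) False] by (simp add: Tr_0)
  next
    case False
    then show ?thesis using Q_shift_in(2)[OF that False, of 0] by simp
  qed
  have s: "?Q (a+a') t = ?Q a t + ?Q a' t" for t by (simp add: distrib_right Tr_add)
  have d: "?Q (a-a') t = ?Q a t - ?Q a' t" for t by (simp add: left_diff_distrib Tr_diff)
  have id: "((x+y)^2 + 1) + (-1)*((x-y)^2 + 1) = (x::'a) * y" for x y
  proof -
    have "((x+y)^2 + 1) + (-1)*((x-y)^2 + 1) = 4*(x*y)" by (simp add: algebra_simps power2_eq_square)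
    then show ?thesis using four_eq by simp
  qed
  have "(\<lambda>t. ((?Q (a+a') t)^2 + 1) + (-1)*((?Q (a-a') t)^2 + 1)) \<in> span_F3 BL"
    by (intro span_add span_smul F3_m1 sq1 subF_add subF_diff assms)
  then have "(\<lambda>t. ?Q a t * ?Q a' t) \<in> span_F3 BL" by (simp only: s d id)
  then show ?thesis using p1 by simp
qed

end

theorem lemma3p8:
  fixes m :: nat and a a' :: "'a::{field,finite}"
  assumes "m \<ge> 2"
    and "card (UNIV :: 'a set) = 3 ^ (2 * m)"
    and "a \<in> subF m" and "a' \<in> subF m"
  shows "((\<lambda>t. Tr (2*m) (a * t ^ (3 ^ m + 1))) \<in> span_F3 (min_blocks (code_C m :: ('a \<Rightarrow> 'a) set)))
       \<and> ((\<lambda>t. Tr (2*m) (a * t ^ (3 ^ m + 1)) * Tr (2*m) (a' * t ^ (3 ^ m + 1)))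
           \<in> span_F3 (min_blocks (code_C m :: ('a \<Rightarrow> 'a) set)))"
  using main[OF assms(2) _ assms(3,4)] assms(1) by simp

end
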